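(* Let $\tilde{\mathfrak g}$ be a real Lie algebra with a metric $\langle,\rangle$ and a pseudo-Iwasawa decomposition $\tilde{\mathfrak g}=\mathfrak g\oplus^\perp\mathfrak a$. Let $H\in\tilde{\mathfrak g}$ be defined by $\langle H,v\rangle=\operatorname{Tr}(\operatorname{ad}v)$ for all $v\in\tilde{\mathfrak g}$, let $\widetilde{\operatorname{ric}}$ be the Ricci tensor of $\tilde{\mathfrak g}$ and $\operatorname{ric}$ that of $\mathfrak g$ with the restricted metric. Then $\widetilde{\operatorname{ric}}(v,w)=\operatorname{ric}(v,w)-\langle[H,v],w\rangle$ for $v,w\in\mathfrak g$; $\widetilde{\operatorname{ric}}(v,X)=0$ for $v\in\mathfrak g$, $X\in\mathfrak a$; $\widetilde{\operatorname{ric}}(X,Y)=-\operatorname{Tr}(\operatorname{ad}X\circ\operatorname{ad}Y)$ for $X,Y\in\mathfrak a$.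
   Context: A metric on a Lie algebra is a nondegenerate symmetric bilinear form, possibly indefinite; the Ricci tensor is that of the corresponding left-invariant pseudo-Riemannian metric on the simply connected Lie group. A pseudo-Iwasawa decomposition of a metric Lie algebra $\tilde{\mathfrak g}$ is an orthogonal direct sum of vector spaces $\tilde{\mathfrak g}=\mathfrak g\oplus^\perp\mathfrak a$ with $\mathfrak g$ a nilpotent ideal, $\mathfrak a$ an abelian subalgebra, and $\operatorname{ad}X$ self-adjoint for every $X\in\mathfrak a$. *)

theory Defs
  imports "HOL-Analysis.Analysis"
begin

text \<open>Finite-dimensional real vector space: a type of class euclidean_space
  (its built-in inner product plays no role).  A Lie algebra lives on a
  carrier subspace V; the bracket is a bilinear map br.\<close>

definition lie_algebra_on :: "'a::euclidean_space set \<Rightarrow> ('a \<Rightarrow> 'a \<Rightarrow> 'a) \<Rightarrow> bool" where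
  "lie_algebra_on V br \<longleftrightarrow> subspace V \<and> bilinear br \<and>
     (\<forall>x\<in>V. \<forall>y\<in>V. br x y \<in> V) \<and>
     (\<forall>x\<in>V. \<forall>y\<in>V. br x y = - br y x) \<and>
     (\<forall>x\<in>V. \<forall>y\<in>V. \<forall>z\<in>V. br x (br y z) + br y (br z x) + br z (br x y) = 0)"

definition metric_on :: "'a::euclidean_space set \<Rightarrow> ('a \<Rightarrow> 'a \<Rightarrow> real) \<Rightarrow> bool" where
  "metric_on V m \<longleftrightarrow> bilinear m \<and> (\<forall>x\<in>V. \<forall>y\<in>V. m x y = m y x) \<and>
     (\<forall>x\<in>V. (\<forall>y\<in>V. m x y = 0) \<longrightarrow> x = 0)"

definition trace_on :: "'a::euclidean_space set \<Rightarrow> ('a \<Rightarrow> 'a) \<Rightarrow> real" where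
  "trace_on V f = (let B = (SOME B. B \<subseteq> V \<and> independent B \<and> span B = V)
     in \<Sum>b\<in>B. real_vector.representation B (f b) b)"

text \<open>Levi-Civita connection of the left-invariant metric (Koszul formula):
  2 m (nabla u v) x = m [u,v] x - m [v,x] u + m [x,u] v.\<close>
definition lc_nabla :: "'a::euclidean_space set \<Rightarrow> ('a \<Rightarrow> 'a \<Rightarrow> 'a) \<Rightarrow> ('a \<Rightarrow> 'a \<Rightarrow> real)
    \<Rightarrow> 'a \<Rightarrow> 'a \<Rightarrow> 'a" where
  "lc_nabla V br m u v = (THE z. z \<in> V \<and>
     (\<forall>x\<in>V. 2 * m z x = m (br u v) x - m (br v x) u + m (br x u) v))"

definition curv :: "'a::euclidean_space set \<Rightarrow> ('a \<Rightarrow> 'a \<Rightarrow> 'a) \<Rightarrow> ('a \<Rightarrow> 'a \<Rightarrow> real)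
    \<Rightarrow> 'a \<Rightarrow> 'a \<Rightarrow> 'a \<Rightarrow> 'a" where
  "curv V br m x y z = lc_nabla V br m x (lc_nabla V br m y z)
     - lc_nabla V br m y (lc_nabla V br m x z) - lc_nabla V br m (br x y) z"

definition ricci :: "'a::euclidean_space set \<Rightarrow> ('a \<Rightarrow> 'a \<Rightarrow> 'a) \<Rightarrow> ('a \<Rightarrow> 'a \<Rightarrow> real)
    \<Rightarrow> 'a \<Rightarrow> 'a \<Rightarrow> real" where
  "ricci V br m v w = trace_on V (\<lambda>x. curv V br m x v w)"

fun lcs :: "('a::euclidean_space \<Rightarrow> 'a \<Rightarrow> 'a) \<Rightarrow> 'a set \<Rightarrow> nat \<Rightarrow> 'a set" where
  "lcs br g 0 = g"
| "lcs br g (Suc n) = span {br x y | x y. x \<in> g \<and> y \<in> lcs br g n}"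

definition nilpotent_on :: "('a::euclidean_space \<Rightarrow> 'a \<Rightarrow> 'a) \<Rightarrow> 'a set \<Rightarrow> bool" where
  "nilpotent_on br g \<longleftrightarrow> (\<exists>n. lcs br g n = {0})"

definition lie_ideal :: "('a::euclidean_space \<Rightarrow> 'a \<Rightarrow> 'a) \<Rightarrow> 'a set \<Rightarrow> bool" where
  "lie_ideal br g \<longleftrightarrow> subspace g \<and> (\<forall>x. \<forall>y\<in>g. br x y \<in> g)"

definition abelian_subalgebra :: "('a::euclidean_space \<Rightarrow> 'a \<Rightarrow> 'a) \<Rightarrow> 'a set \<Rightarrow> bool" where
  "abelian_subalgebra br a \<longleftrightarrow> subspace a \<and> (\<forall>x\<in>a. \<forall>y\<in>a. br x y = 0)"

definition pseudo_iwasawa :: "('a::euclidean_space \<Rightarrow> 'a \<Rightarrow> 'a) \<Rightarrow> ('a \<Rightarrow> 'a \<Rightarrow> real)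
    \<Rightarrow> 'a set \<Rightarrow> 'a set \<Rightarrow> bool" where
  "pseudo_iwasawa br m g a \<longleftrightarrow>
     lie_ideal br g \<and> nilpotent_on br g \<and> abelian_subalgebra br a \<and>
     g \<inter> a = {0} \<and> (\<forall>z. \<exists>v\<in>g. \<exists>X\<in>a. z = v + X) \<and>
     (\<forall>v\<in>g. \<forall>X\<in>a. m v X = 0) \<and>
     (\<forall>X\<in>a. \<forall>u w. m (br X u) w = m u (br X w))"

end

theory Submission
  imports Defs
begin

definition lin_on :: "'a::real_vector set \<Rightarrow> ('a \<Rightarrow> 'b::real_vector) \<Rightarrow> bool" where
  "lin_on V f \<longleftrightarrow> (\<forall>x\<in>V. \<forall>y\<in>V. f (x + y) = f x + f y) \<and> (\<forall>x\<in>V. \<forall>c. f (c *\<^sub>R x) = c *\<^sub>R f x)"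

lemma lin_on_zero:
  assumes "subspace V" "lin_on V f" shows "f 0 = 0"
proof -
  have "0 \<in> V" using assms(1) by (rule subspace_0)
  then have "f (0 *\<^sub>R 0) = 0 *\<^sub>R f 0" using assms(2) unfolding lin_on_def by blast
  then show ?thesis by simp
qed

lemma lin_on_sum:
  assumes V: "subspace V" and f: "lin_on V f" and I: "finite I" and x: "\<forall>i\<in>I. x i \<in> V"
  shows "f (\<Sum>i\<in>I. c i *\<^sub>R x i) = (\<Sum>i\<in>I. c i *\<^sub>R f (x i))"
  using I x
proof (induction I rule: finite_induct)
  case empty
  then show ?case using lin_on_zero[OF V f] by simp
next
  case (insert j I)
  have m1: "c j *\<^sub>R x j \<in> V" using insert V by (simp add: subspace_scale)
  have m2: "(\<Sum>i\<in>I. c i *\<^sub>R x i) \<in> V" using insert V by (intro subspace_sum subspace_scale) auto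
  have "f (\<Sum>i\<in>insert j I. c i *\<^sub>R x i) = f (c j *\<^sub>R x j + (\<Sum>i\<in>I. c i *\<^sub>R x i))"
    using insert by simp
  also have "\<dots> = f (c j *\<^sub>R x j) + f (\<Sum>i\<in>I. c i *\<^sub>R x i)"
    using f m1 m2 unfolding lin_on_def by blast
  also have "f (c j *\<^sub>R x j) = c j *\<^sub>R f (x j)" using f insert unfolding lin_on_def by blast
  finally show ?case using insert by simp
qed

lemma lin_on_linear: "linear f \<Longrightarrow> lin_on V f"
  unfolding lin_on_def by (simp add: linear_add linear_scale)

lemma trace_dual:
  fixes V :: "'a::euclidean_space set"
  assumes V: "subspace V" and I: "finite I" and e: "\<forall>i\<in>I. e i \<in> V"
    and rep: "\<forall>x\<in>V. x = (\<Sum>i\<in>I. \<phi> i x *\<^sub>R e i)"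
    and phi: "\<forall>i\<in>I. lin_on V (\<phi> i)" and T: "lin_on V T" "\<forall>x\<in>V. T x \<in> V"
  shows "trace_on V T = (\<Sum>i\<in>I. \<phi> i (T (e i)))"
proof -
  obtain B0 where B0: "B0 \<subseteq> V" "independent B0" "V \<subseteq> span B0"
    by (rule basis_exists)
  have "span B0 = V" using B0 V by (meson span_minimal subset_antisym)
  define B where "B = (SOME B. B \<subseteq> V \<and> independent B \<and> span B = V)"
  have BB: "B \<subseteq> V \<and> independent B \<and> span B = V" unfolding B_def
    by (rule someI[of _ B0]) (use B0 \<open>span B0 = V\<close> in auto)
  have fin: "finite B" using BB independent_bound by blast
  have tr: "trace_on V T = (\<Sum>b\<in>B. real_vector.representation B (T b) b)"
    by (simp add: trace_on_def B_def Let_def)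
  have TeV: "\<forall>i\<in>I. T (e i) \<in> span B" using T e BB by auto
  have Tb: "T b = (\<Sum>i\<in>I. \<phi> i b *\<^sub>R T (e i))" if "b \<in> B" for b
  proof -
    have "b \<in> V" using that BB by auto
    then have "T b = T (\<Sum>i\<in>I. \<phi> i b *\<^sub>R e i)" using rep by metis
    also have "\<dots> = (\<Sum>i\<in>I. \<phi> i b *\<^sub>R T (e i))" by (rule lin_on_sum[OF V T(1) I e])
    finally show ?thesis .
  qed
  have rb: "real_vector.representation B (T b) b = (\<Sum>i\<in>I. \<phi> i b * real_vector.representation B (T (e i)) b)"
    if "b \<in> B" for b
  proof -
    have "real_vector.representation B (T b) = real_vector.representation B (\<Sum>i\<in>I. \<phi> i b *\<^sub>R T (e i))"
      using Tb[OF that] by simp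
    also have "\<dots> = (\<lambda>c. \<Sum>i\<in>I. real_vector.representation B (\<phi> i b *\<^sub>R T (e i)) c)"
      using BB TeV by (intro real_vector.representation_sum) (auto intro: span_scale)
    also have "\<dots> = (\<lambda>c. \<Sum>i\<in>I. \<phi> i b * real_vector.representation B (T (e i)) c)"
      using BB TeV by (simp add: real_vector.representation_scale)
    finally show ?thesis by simp
  qed
  have "trace_on V T = (\<Sum>b\<in>B. \<Sum>i\<in>I. \<phi> i b * real_vector.representation B (T (e i)) b)"
    using tr rb by simp
  also have "\<dots> = (\<Sum>i\<in>I. \<Sum>b\<in>B. real_vector.representation B (T (e i)) b *\<^sub>R \<phi> i b)"
    by (subst sum.swap) (simp add: mult.commute)
  also have "\<dots> = (\<Sum>i\<in>I. \<phi> i (T (e i)))"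
  proof (rule sum.cong[OF refl])
    fix i assume i: "i \<in> I"
    have "(\<Sum>b\<in>B. real_vector.representation B (T (e i)) b *\<^sub>R \<phi> i b)
        = \<phi> i (\<Sum>b\<in>B. real_vector.representation B (T (e i)) b *\<^sub>R b)"
      using lin_on_sum[OF V _ fin, of "\<phi> i" "\<lambda>b. b" "real_vector.representation B (T (e i))"] phi i BB
      by (simp add: subset_iff)
    also have "(\<Sum>b\<in>B. real_vector.representation B (T (e i)) b *\<^sub>R b) = T (e i)"
      using BB fin TeV i by (intro real_vector.sum_representation_eq) auto
    finally show "(\<Sum>b\<in>B. real_vector.representation B (T (e i)) b *\<^sub>R \<phi> i b) = \<phi> i (T (e i))" .
  qed
  finally show ?thesis .
qed

definition dualfam :: "'a::euclidean_space set \<Rightarrow> ('a \<Rightarrow> 'a \<Rightarrow> real) \<Rightarrow> 'a set \<Rightarrow> ('a \<Rightarrow> 'a) \<Rightarrow> bool" where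
  "dualfam V m B f \<longleftrightarrow> finite B \<and> B \<subseteq> V \<and> f ` B \<subseteq> V \<and>
     (\<forall>x\<in>V. x = (\<Sum>b\<in>B. m x (f b) *\<^sub>R b)) \<and> (\<forall>x\<in>V. x = (\<Sum>b\<in>B. m x b *\<^sub>R f b))"

lemma bilinear_lin_on1: "bilinear m \<Longrightarrow> lin_on V (\<lambda>x. m x y)"
  by (rule lin_on_linear) (auto simp: bilinear_def)

lemma trace_df:
  fixes V :: "'a::euclidean_space set"
  assumes V: "subspace V" and m: "bilinear m" and D: "dualfam V m B f"
    and T: "lin_on V T" "\<forall>x\<in>V. T x \<in> V"
  shows "trace_on V T = (\<Sum>b\<in>B. m (T b) (f b))"
    and "trace_on V T = (\<Sum>b\<in>B. m (T (f b)) b)"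
proof -
  show "trace_on V T = (\<Sum>b\<in>B. m (T b) (f b))"
    using D V T bilinear_lin_on1[OF m]
    by (intro trace_dual[where e="\<lambda>b. b" and \<phi>="\<lambda>b x. m x (f b)"]) (auto simp: dualfam_def)
  show "trace_on V T = (\<Sum>b\<in>B. m (T (f b)) b)"
    using D V T bilinear_lin_on1[OF m]
    by (intro trace_dual[where e="f" and \<phi>="\<lambda>b x. m x b"]) (auto simp: dualfam_def)
qed

lemma dualfam_exists:
  fixes V :: "'a::euclidean_space set"
  assumes V: "subspace V" and m: "bilinear m"
    and sym: "\<forall>x\<in>V. \<forall>y\<in>V. m x y = m y x"
    and nd: "\<forall>x\<in>V. (\<forall>y\<in>V. m x y = 0) \<longrightarrow> x = 0"
  shows "\<exists>B f. dualfam V m B f \<and> 0 \<notin> B"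
proof -
  obtain B where B: "B \<subseteq> V" "independent B" "V \<subseteq> span B"
    by (rule basis_exists)
  have spB: "span B = V" using B V by (meson span_minimal subset_antisym)
  have fin: "finite B" using B independent_bound by blast
  have indep: "\<And>c. (\<Sum>v\<in>B. c v *\<^sub>R v) = 0 \<Longrightarrow> \<forall>v\<in>B. c v = 0"
    using B(2) independent_explicit by blast
  have msum: "m (\<Sum>b\<in>B. c b *\<^sub>R b) y = (\<Sum>b\<in>B. c b * m b y)" for c y
  proof -
    have l: "linear (\<lambda>x. m x y)" using m by (simp add: bilinear_def)
    show ?thesis using linear_sum[OF l, of "\<lambda>b. c b *\<^sub>R b" B] linear_scale[OF l] by simp
  qed
  have msum2: "m y (\<Sum>b\<in>B. c b *\<^sub>R b) = (\<Sum>b\<in>B. c b * m y b)" for c y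
  proof -
    have l: "linear (m y)" using m by (simp add: bilinear_def)
    show ?thesis using linear_sum[OF l, of "\<lambda>b. c b *\<^sub>R b" B] linear_scale[OF l] by simp
  qed
  have rep: "x = (\<Sum>b\<in>B. real_vector.representation B x b *\<^sub>R b)" if "x \<in> V" for x
    using real_vector.sum_representation_eq[OF B(2) _ fin subset_refl, of x] that spB by simp
  define G where "G y = (\<Sum>b\<in>B. m b y *\<^sub>R b)" for y
  have linG: "linear G"
    by (rule linearI) (simp_all add: G_def bilinear_radd[OF m] bilinear_rmul[OF m]
           scaleR_add_left sum.distrib scaleR_sum_right)
  have GV: "G ` V \<subseteq> V" unfolding G_def using B V by (auto intro!: subspace_sum subspace_scale)
  have mspan: "m x y = 0" if "x \<in> V" "\<forall>b\<in>B. m b y = 0" for x y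
  proof -
    have "m (\<Sum>b\<in>B. real_vector.representation B x b *\<^sub>R b) y = (\<Sum>b\<in>B. real_vector.representation B x b * m b y)"
      by (rule msum)
    then have "m x y = (\<Sum>b\<in>B. real_vector.representation B x b * m b y)"
      using rep[OF that(1), symmetric] by simp
    then show ?thesis using that by simp
  qed
  have injG: "inj_on G V"
  proof (subst linear_injective_on_subspace_0[OF linG V], intro ballI impI)
    fix y assume y: "y \<in> V" "G y = 0"
    then have "\<forall>b\<in>B. m b y = 0" using indep[of "\<lambda>b. m b y"] unfolding G_def by blast
    then have "\<forall>x\<in>V. m y x = 0" using mspan sym y by metis
    then show "y = 0" using nd y by blast
  qed
  have GVeq: "G ` V = V"
  proof -
    have "span V = V" using V by (simp add: span_eq_iff)
    then have "dim (G ` V) = dim V" using dim_image_eq[OF linG, of V] injG by metis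
    moreover have "subspace (G ` V)" using linG V by (rule linear_subspace_image)
    ultimately show ?thesis using subspace_dim_equal[OF _ V GV] by simp
  qed
  have "\<forall>c\<in>B. \<exists>y. y \<in> V \<and> G y = c"
  proof
    fix c assume "c \<in> B"
    then have "c \<in> V" using B(1) by blast
    then have "c \<in> G ` V" by (simp only: GVeq)
    then show "\<exists>y. y \<in> V \<and> G y = c" by (auto simp del: GVeq)
  qed
  then have "\<exists>f. \<forall>c\<in>B. f c \<in> V \<and> G (f c) = c" by (rule bchoice)
  then obtain f where f: "\<forall>c\<in>B. f c \<in> V \<and> G (f c) = c" by blast
  have delta: "m b (f c) = (if b = c then 1 else 0)" if "b \<in> B" "c \<in> B" for b c
  proof -
    have "(\<Sum>v\<in>B. (m v (f c) - (if v = c then 1 else 0)) *\<^sub>R v) = G (f c) - (\<Sum>v\<in>B. (if v = c then 1 else 0) *\<^sub>R v)"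
      unfolding G_def by (simp add: scaleR_diff_left sum_subtractf)
    also have "(\<Sum>v\<in>B. (if v = c then 1 else 0) *\<^sub>R v) = (\<Sum>v\<in>B. if v = c then c else 0)"
      by (rule sum.cong) auto
    also have "\<dots> = c" using that fin by simp
    finally have "(\<Sum>v\<in>B. (m v (f c) - (if v = c then 1 else 0)) *\<^sub>R v) = 0" using f that by simp
    then have "\<forall>v\<in>B. m v (f c) - (if v = c then 1 else 0) = 0"
      by (rule indep)
    then show ?thesis using that by auto
  qed
  have r1: "x = (\<Sum>c\<in>B. m x (f c) *\<^sub>R c)" if x: "x \<in> V" for x
  proof -
    have "m x (f c) = real_vector.representation B x c" if c: "c \<in> B" for c
    proof -
      have "m (\<Sum>b\<in>B. real_vector.representation B x b *\<^sub>R b) (f c) = (\<Sum>b\<in>B. real_vector.representation B x b * m b (f c))"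
        by (rule msum)
      then have "m x (f c) = (\<Sum>b\<in>B. real_vector.representation B x b * m b (f c))"
        using rep[OF x, symmetric] by simp
      also have "\<dots> = (\<Sum>b\<in>B. real_vector.representation B x b * (if b = c then 1 else 0))"
        using delta c by (intro sum.cong) auto
      also have "\<dots> = real_vector.representation B x c" using c fin
        by (simp add: if_distrib[of "\<lambda>t. _ * t"] sum.delta cong: if_cong)
      finally show ?thesis .
    qed
    then have e1: "(\<Sum>c\<in>B. m x (f c) *\<^sub>R c) = (\<Sum>c\<in>B. real_vector.representation B x c *\<^sub>R c)"
      by simp
    show ?thesis by (rule trans[OF rep[OF x] e1[symmetric]])
  qed
  have r2: "x = (\<Sum>c\<in>B. m x c *\<^sub>R f c)" if x: "x \<in> V" for x
  proof -
    define x' where "x' = (\<Sum>c\<in>B. m x c *\<^sub>R f c)"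
    have x'V: "x' \<in> V" unfolding x'_def using f V by (auto intro!: subspace_sum subspace_scale)
    have "m (x' - x) y = 0" if y: "y \<in> V" for y
    proof -
      have lx: "linear (\<lambda>z. m z y)" using m by (simp add: bilinear_def)
      have "m x' y = (\<Sum>c\<in>B. m x c * m (f c) y)"
        unfolding x'_def using linear_sum[OF lx, of "\<lambda>c. m x c *\<^sub>R f c" B] linear_scale[OF lx] by simp
      also have "\<dots> = (\<Sum>c\<in>B. m y (f c) * m x c)"
        using sym f B x y by (intro sum.cong) (auto simp: subset_iff)
      also have "\<dots> = m x (\<Sum>c\<in>B. m y (f c) *\<^sub>R c)" using msum2 by simp
      also have "\<dots> = m x y" using r1[OF y, symmetric] by simp
      finally show ?thesis by (simp add: bilinear_lsub[OF m])
    qed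
    then have "x' - x = 0" using nd x x'V V by (meson subspace_diff)
    then show ?thesis unfolding x'_def by simp
  qed
  have "f ` B \<subseteq> V" using f by blast
  then have "dualfam V m B f" unfolding dualfam_def using fin B(1) r1 r2 by blast
  moreover have "0 \<notin> B" using B(2) dependent_zero by blast
  ultimately show ?thesis by blast
qed

lemma riesz:
  fixes V :: "'a::euclidean_space set"
  assumes V: "subspace V" and m: "bilinear m" and sym: "\<forall>x\<in>V. \<forall>y\<in>V. m x y = m y x"
    and D: "dualfam V m B f" and psi: "lin_on V \<psi>"
  shows "\<exists>z\<in>V. \<forall>x\<in>V. m z x = \<psi> x"
proof -
  have fin: "finite B" and BV: "B \<subseteq> V" and fV: "f ` B \<subseteq> V"
    and r1: "\<forall>x\<in>V. x = (\<Sum>b\<in>B. m x (f b) *\<^sub>R b)" using D by (auto simp: dualfam_def)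
  define z where "z = (\<Sum>b\<in>B. \<psi> b *\<^sub>R f b)"
  have zV: "z \<in> V" unfolding z_def using fV V by (auto intro!: subspace_sum subspace_scale)
  have "m z x = \<psi> x" if x: "x \<in> V" for x
  proof -
    have lx: "linear (\<lambda>z. m z x)" using m by (simp add: bilinear_def)
    have "m z x = (\<Sum>b\<in>B. \<psi> b * m (f b) x)"
      unfolding z_def using linear_sum[OF lx, of "\<lambda>b. \<psi> b *\<^sub>R f b" B] linear_scale[OF lx] by simp
    also have "\<dots> = (\<Sum>b\<in>B. m x (f b) *\<^sub>R \<psi> b)"
      using sym fV x by (intro sum.cong) auto
    also have "\<dots> = \<psi> (\<Sum>b\<in>B. m x (f b) *\<^sub>R b)"
      using lin_on_sum[OF V psi fin, of "\<lambda>b. b" "\<lambda>b. m x (f b)"] BV by (simp add: subset_iff)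
    also have "\<dots> = \<psi> x" using r1 x by metis
    finally show ?thesis .
  qed
  then show ?thesis using zV by blast
qed

definition kos :: "('a \<Rightarrow> 'a \<Rightarrow> 'a) \<Rightarrow> ('a \<Rightarrow> 'a \<Rightarrow> real) \<Rightarrow> 'a \<Rightarrow> 'a \<Rightarrow> 'a \<Rightarrow> real" where
  "kos br m u v x = m (br u v) x - m (br v x) u + m (br x u) v"

lemma kos_lin:
  fixes br :: "'a::real_vector \<Rightarrow> 'a \<Rightarrow> 'a" and m :: "'a \<Rightarrow> 'a \<Rightarrow> real"
  shows "bilinear m \<Longrightarrow> bilinear br \<Longrightarrow> lin_on V (\<lambda>x. kos br m u v x / 2)"
  unfolding lin_on_def kos_def
  by (simp add: bilinear_radd bilinear_ladd bilinear_rmul bilinear_lmul algebra_simps add_divide_distrib diff_divide_distrib)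

locale nab =
  fixes V :: "'a::euclidean_space set" and br :: "'a \<Rightarrow> 'a \<Rightarrow> 'a" and m :: "'a \<Rightarrow> 'a \<Rightarrow> real"
    and B :: "'a set" and f :: "'a \<Rightarrow> 'a"
  assumes V: "subspace V" and m: "bilinear m" and br: "bilinear br"
    and sym: "\<forall>x\<in>V. \<forall>y\<in>V. m x y = m y x"
    and nd: "\<forall>x\<in>V. (\<forall>y\<in>V. m x y = 0) \<longrightarrow> x = 0"
    and D: "dualfam V m B f"
begin

lemma uniq: "z \<in> V \<Longrightarrow> z' \<in> V \<Longrightarrow> \<forall>x\<in>V. m z x = m z' x \<Longrightarrow> z = z'"
  using nd[rule_format, of "z - z'"] V by (simp add: bilinear_lsub[OF m] subspace_diff)

lemma nabla_ex: "\<exists>!z. z \<in> V \<and> (\<forall>x\<in>V. 2 * m z x = kos br m u v x)"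
proof -
  obtain z where z: "z \<in> V" "\<forall>x\<in>V. m z x = kos br m u v x / 2"
    using riesz[OF V m sym D kos_lin[OF m br]] by blast
  show ?thesis
  proof (rule ex1I[of _ z])
    show "z \<in> V \<and> (\<forall>x\<in>V. 2 * m z x = kos br m u v x)"
    proof (intro conjI ballI)
      fix x assume "x \<in> V"
      then have "m z x = kos br m u v x / 2" using z by blast
      then show "2 * m z x = kos br m u v x" by simp
    qed (rule z(1))
    fix z' assume z': "z' \<in> V \<and> (\<forall>x\<in>V. 2 * m z' x = kos br m u v x)"
    have "\<forall>x\<in>V. m z' x = m z x"
    proof
      fix x assume "x \<in> V"
      then have "m z x = kos br m u v x / 2" "2 * m z' x = kos br m u v x" using z z' by blast+
      then show "m z' x = m z x" by simp
    qed
    then show "z' = z" using z(1) z' uniq by blast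
  qed
qed

lemma nabla: "lc_nabla V br m u v \<in> V" "\<forall>x\<in>V. 2 * m (lc_nabla V br m u v) x = kos br m u v x"
  using theI'[OF nabla_ex[of u v]] unfolding lc_nabla_def kos_def by auto

lemma nabla_char: "z \<in> V \<Longrightarrow> \<forall>x\<in>V. 2 * m z x = kos br m u v x \<Longrightarrow> lc_nabla V br m u v = z"
  using nabla_ex[of u v] nabla[of u v] by blast

lemma nabla_bil: "bilinear (lc_nabla V br m)"
proof -
  let ?N = "lc_nabla V br m"
  have add2: "?N u (v + w) = ?N u v + ?N u w" for u v w
  proof (rule nabla_char)
    show "?N u v + ?N u w \<in> V" using nabla(1) V by (simp add: subspace_add)
    show "\<forall>x\<in>V. 2 * m (?N u v + ?N u w) x = kos br m u (v + w) x"
    proof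
      fix x assume x: "x \<in> V"
      have "2 * m (?N u v + ?N u w) x = 2 * m (?N u v) x + 2 * m (?N u w) x"
        by (simp add: bilinear_ladd[OF m] algebra_simps)
      also have "\<dots> = kos br m u v x + kos br m u w x" using nabla(2) x by simp
      also have "\<dots> = kos br m u (v + w) x"
        by (simp add: kos_def bilinear_ladd[OF m] bilinear_radd[OF m] bilinear_ladd[OF br] bilinear_radd[OF br])
      finally show "2 * m (?N u v + ?N u w) x = kos br m u (v + w) x" .
    qed
  qed
  have add1: "?N (v + w) u = ?N v u + ?N w u" for u v w
  proof (rule nabla_char)
    show "?N v u + ?N w u \<in> V" using nabla(1) V by (simp add: subspace_add)
    show "\<forall>x\<in>V. 2 * m (?N v u + ?N w u) x = kos br m (v + w) u x"
    proof
      fix x assume x: "x \<in> V"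
      have "2 * m (?N v u + ?N w u) x = 2 * m (?N v u) x + 2 * m (?N w u) x"
        by (simp add: bilinear_ladd[OF m] algebra_simps)
      also have "\<dots> = kos br m v u x + kos br m w u x" using nabla(2) x by simp
      also have "\<dots> = kos br m (v + w) u x"
        by (simp add: kos_def bilinear_ladd[OF m] bilinear_radd[OF m] bilinear_ladd[OF br] bilinear_radd[OF br])
      finally show "2 * m (?N v u + ?N w u) x = kos br m (v + w) u x" .
    qed
  qed
  have sc2: "?N u (c *\<^sub>R v) = c *\<^sub>R ?N u v" for u v c
  proof (rule nabla_char)
    show "c *\<^sub>R ?N u v \<in> V" using nabla(1) V by (simp add: subspace_scale)
    show "\<forall>x\<in>V. 2 * m (c *\<^sub>R ?N u v) x = kos br m u (c *\<^sub>R v) x"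
    proof
      fix x assume x: "x \<in> V"
      have "2 * m (c *\<^sub>R ?N u v) x = c * (2 * m (?N u v) x)"
        by (simp add: bilinear_lmul[OF m])
      also have "\<dots> = c * kos br m u v x" using nabla(2) x by simp
      also have "\<dots> = kos br m u (c *\<^sub>R v) x"
        by (simp add: kos_def bilinear_lmul[OF m] bilinear_rmul[OF m] bilinear_lmul[OF br] bilinear_rmul[OF br] algebra_simps)
      finally show "2 * m (c *\<^sub>R ?N u v) x = kos br m u (c *\<^sub>R v) x" .
    qed
  qed
  have sc1: "?N (c *\<^sub>R v) u = c *\<^sub>R ?N v u" for u v c
  proof (rule nabla_char)
    show "c *\<^sub>R ?N v u \<in> V" using nabla(1) V by (simp add: subspace_scale)
    show "\<forall>x\<in>V. 2 * m (c *\<^sub>R ?N v u) x = kos br m (c *\<^sub>R v) u x"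
    proof
      fix x assume x: "x \<in> V"
      have "2 * m (c *\<^sub>R ?N v u) x = c * (2 * m (?N v u) x)"
        by (simp add: bilinear_lmul[OF m])
      also have "\<dots> = c * kos br m v u x" using nabla(2) x by simp
      also have "\<dots> = kos br m (c *\<^sub>R v) u x"
        by (simp add: kos_def bilinear_lmul[OF m] bilinear_rmul[OF m] bilinear_lmul[OF br] bilinear_rmul[OF br] algebra_simps)
      finally show "2 * m (c *\<^sub>R ?N v u) x = kos br m (c *\<^sub>R v) u x" .
    qed
  qed
  show ?thesis unfolding bilinear_def
    by (intro conjI allI linearI) (simp_all add: add1 add2 sc1 sc2)
qed

end


lemma rep_lin: "independent B \<Longrightarrow> lin_on (span B) (\<lambda>x. real_vector.representation B x b)"
  unfolding lin_on_def by (simp add: real_vector.representation_add real_vector.representation_scale)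

lemma trace_zero_space: "trace_on {0} T = 0"
proof -
  define B where "B = (SOME B. B \<subseteq> ({0}::'a::euclidean_space set) \<and> independent B \<and> span B = {0})"
  have "B \<subseteq> {0} \<and> independent B \<and> span B = {0}" unfolding B_def
    by (rule someI[of _ "{}"]) (simp add: independent_empty)
  then have "B = {}" using dependent_zero by blast
  then show ?thesis by (simp add: trace_on_def B_def[symmetric] Let_def)
qed

lemma trace_filtr:
  fixes V :: "'a::euclidean_space set"
  assumes V: "subspace V" and W: "subspace W" "W \<subseteq> V" and T: "linear T" "T ` V \<subseteq> W"
  shows "trace_on V T = trace_on W T"
proof -
  obtain C where C: "C \<subseteq> W" "independent C" "W \<subseteq> span C" by (rule basis_exists)
  have spC: "span C = W" using C W by (meson span_minimal subset_antisym)
  obtain B where B: "C \<subseteq> B" "B \<subseteq> V" "independent B" "V \<subseteq> span B"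
    using real_vector.maximal_independent_subset_extend[of C V] C W by blast
  have spB: "span B = V" using B V by (meson span_minimal subset_antisym)
  have finB: "finite B" using B independent_bound by blast
  have finC: "finite C" using C independent_bound by blast
  have tV: "trace_on V T = (\<Sum>b\<in>B. real_vector.representation B (T b) b)"
  proof (rule trace_dual[where e="\<lambda>b. b" and \<phi>="\<lambda>b x. real_vector.representation B x b"])
    show "\<forall>x\<in>V. x = (\<Sum>b\<in>B. real_vector.representation B x b *\<^sub>R b)"
      using real_vector.sum_representation_eq[OF B(3) _ finB subset_refl] spB by auto
    show "\<forall>i\<in>B. lin_on V (\<lambda>x. real_vector.representation B x i)" using rep_lin[OF B(3)] spB by auto
  qed (use V B T W finB lin_on_linear in auto)
  have tW: "trace_on W T = (\<Sum>b\<in>C. real_vector.representation C (T b) b)"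
  proof (rule trace_dual[where e="\<lambda>b. b" and \<phi>="\<lambda>b x. real_vector.representation C x b"])
    show "\<forall>x\<in>W. x = (\<Sum>b\<in>C. real_vector.representation C x b *\<^sub>R b)"
      using real_vector.sum_representation_eq[OF C(2) _ finC subset_refl] spC by auto
    show "\<forall>i\<in>C. lin_on W (\<lambda>x. real_vector.representation C x i)" using rep_lin[OF C(2)] spC by auto
    show "lin_on W T" using T(1) by (rule lin_on_linear)
    show "\<forall>x\<in>W. T x \<in> W" using T W by blast
  qed (use V B T W C finC in auto)
  have eq: "real_vector.representation B (T b) = real_vector.representation C (T b)" if "b \<in> B" for b
  proof -
    have "T b \<in> span C" using that B(2) T(2) spC by blast
    then show ?thesis using real_vector.representation_extend[OF B(3) _ B(1)] by blast
  qed
  have "(\<Sum>b\<in>B. real_vector.representation B (T b) b) = (\<Sum>b\<in>B. real_vector.representation C (T b) b)"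
    using eq by simp
  also have "\<dots> = (\<Sum>b\<in>C. real_vector.representation C (T b) b)"
    using finB B(1) real_vector.representation_ne_zero
    by (intro sum.mono_neutral_right) auto
  finally show ?thesis using tV tW by simp
qed


locale PI =
  fixes br :: "'a::euclidean_space \<Rightarrow> 'a \<Rightarrow> 'a" and m :: "'a \<Rightarrow> 'a \<Rightarrow> real" and g a :: "'a set"
  assumes lie: "lie_algebra_on UNIV br" and met: "metric_on UNIV m" and pi: "pseudo_iwasawa br m g a"
begin

lemma brb: "bilinear br" using lie by (simp add: lie_algebra_on_def)
lemma mb: "bilinear m" using met by (simp add: metric_on_def)
lemma msym: "m x y = m y x" using met unfolding metric_on_def by blast
lemma mnd: "(\<And>y. m x y = 0) \<Longrightarrow> x = 0" using met by (simp add: metric_on_def)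
lemma anti: "br x y = - br y x" using lie unfolding lie_algebra_on_def by blast
lemma jac: "br x (br y z) + br y (br z x) + br z (br x y) = 0" using lie unfolding lie_algebra_on_def by blast
lemma gsub: "subspace g" using pi by (simp add: pseudo_iwasawa_def lie_ideal_def)
lemma gid: "y \<in> g \<Longrightarrow> br x y \<in> g" using pi by (simp add: pseudo_iwasawa_def lie_ideal_def)
lemma nil: "\<exists>n. lcs br g n = {0}" using pi by (simp add: pseudo_iwasawa_def nilpotent_on_def)
lemma asub: "subspace a" using pi by (simp add: pseudo_iwasawa_def abelian_subalgebra_def)
lemma aab: "X \<in> a \<Longrightarrow> Y \<in> a \<Longrightarrow> br X Y = 0" using pi by (simp add: pseudo_iwasawa_def abelian_subalgebra_def)
lemma ga0: "g \<inter> a = {0}" using pi by (simp add: pseudo_iwasawa_def)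
lemma dec: "\<exists>v\<in>g. \<exists>X\<in>a. z = v + X" using pi by (simp add: pseudo_iwasawa_def)
lemma orth: "v \<in> g \<Longrightarrow> X \<in> a \<Longrightarrow> m v X = 0" using pi by (simp add: pseudo_iwasawa_def)
lemma orth': "v \<in> g \<Longrightarrow> X \<in> a \<Longrightarrow> m X v = 0" using orth msym by metis
lemma sa: "X \<in> a \<Longrightarrow> m (br X u) w = m u (br X w)" using pi unfolding pseudo_iwasawa_def by blast

lemma jac2: "br x (br y z) = br (br x y) z + br y (br x z)"
proof -
  have "br x (br y z) = - br y (br z x) - br z (br x y)" using jac[of x y z] by (simp add: algebra_simps eq_neg_iff_add_eq_0)
  also have "br y (br z x) = - br y (br x z)" using anti[of z x] bilinear_rneg[OF brb] by simp
  also have "br z (br x y) = - br (br x y) z" by (rule anti)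
  finally show ?thesis by simp
qed

lemma brg: "br u x \<in> g"
proof -
  obtain v X where v: "v \<in> g" "X \<in> a" "x = v + X" using dec by blast
  obtain v' X' where v': "v' \<in> g" "X' \<in> a" "u = v' + X'" using dec by blast
  have "br u x = br u v + br v' X + br X' X"
    using v v' by (simp add: bilinear_radd[OF brb] bilinear_ladd[OF brb])
  moreover have "br v' X \<in> g" using anti[of v' X] gid[OF v'(1)] gsub by (simp add: subspace_neg)
  ultimately show ?thesis using gid[OF v(1)] aab[OF v'(2) v(2)] gsub by (simp add: subspace_add)
qed

lemma ndg: "x \<in> g \<Longrightarrow> \<forall>y\<in>g. m x y = 0 \<Longrightarrow> x = 0"
proof (rule mnd)
  fix z assume x: "x \<in> g" "\<forall>y\<in>g. m x y = 0"
  obtain v X where v: "v \<in> g" "X \<in> a" "z = v + X" using dec by blast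
  show "m x z = 0" using v x orth by (simp add: bilinear_radd[OF mb])
qed

lemma nda: "x \<in> a \<Longrightarrow> \<forall>y\<in>a. m x y = 0 \<Longrightarrow> x = 0"
proof (rule mnd)
  fix z assume x: "x \<in> a" "\<forall>y\<in>a. m x y = 0"
  obtain v X where v: "v \<in> g" "X \<in> a" "z = v + X" using dec by blast
  show "m x z = 0" using v x orth' by (simp add: bilinear_radd[OF mb])
qed

lemma lcs_sub: "subspace (lcs br g k)"
  by (cases k) (auto simp: gsub)

lemma lcs_g: "lcs br g k \<subseteq> g"
proof (induction k)
  case 0 then show ?case by simp
next
  case (Suc k)
  have "{br x y | x y. x \<in> g \<and> y \<in> lcs br g k} \<subseteq> g" using gid Suc by blast
  then show ?case using gsub by (simp add: span_minimal)
qed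

lemma lcs_br: "x \<in> g \<Longrightarrow> y \<in> lcs br g k \<Longrightarrow> br x y \<in> lcs br g (Suc k)"
  by (auto intro!: span_base)

lemma lcs_br': "x \<in> g \<Longrightarrow> y \<in> lcs br g k \<Longrightarrow> br y x \<in> lcs br g (Suc k)"
  using lcs_br[of x y k] anti[of y x] lcs_sub[of "Suc k"] by (metis subspace_neg)

lemma lcs_ad: "y \<in> lcs br g k \<Longrightarrow> br X y \<in> lcs br g k"
proof (induction k arbitrary: y)
  case 0 then show ?case using gid by simp
next
  case (Suc k)
  define S where "S = {br x y | x y. x \<in> g \<and> y \<in> lcs br g k}"
  have lin: "linear (br X)" using brb by (simp add: bilinear_def)
  have "br X ` S \<subseteq> lcs br g (Suc k)"
  proof
    fix z assume "z \<in> br X ` S"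
    then obtain x y where xy: "x \<in> g" "y \<in> lcs br g k" "z = br X (br x y)" unfolding S_def by auto
    have "z = br (br X x) y + br x (br X y)" using xy(3) jac2[of X x y] by (simp only:)
    moreover have "br (br X x) y \<in> lcs br g (Suc k)" using lcs_br[OF gid[OF xy(1)] xy(2)] .
    moreover have "br x (br X y) \<in> lcs br g (Suc k)" using lcs_br[OF xy(1) Suc.IH[OF xy(2)]] .
    ultimately show "z \<in> lcs br g (Suc k)" using lcs_sub[of "Suc k"] by (simp add: subspace_add)
  qed
  then have "span (br X ` S) \<subseteq> lcs br g (Suc k)" using lcs_sub[of "Suc k"] by (simp add: span_minimal)
  moreover have "br X ` span S = span (br X ` S)" using linear_span_image[OF lin] by simp
  moreover have "y \<in> span S" using Suc.prems unfolding S_def by (simp only: lcs.simps)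
  ultimately show ?case by (metis image_eqI subsetD)
qed

lemma lcs_mono: "lcs br g (Suc k) \<subseteq> lcs br g k"
proof (induction k)
  case 0 show ?case using lcs_g[of "Suc 0"] by (simp only: lcs.simps(1))
next
  case (Suc k)
  have "{br x y | x y. x \<in> g \<and> y \<in> lcs br g (Suc k)} \<subseteq> lcs br g (Suc k)"
  proof (intro subsetI, elim CollectE exE conjE)
    fix z x y assume "z = br x y" "x \<in> g" "y \<in> lcs br g (Suc k)"
    then show "z \<in> lcs br g (Suc k)" using Suc.IH lcs_br[of x y k] by (simp only: subset_iff)
  qed
  then have "span {br x y | x y. x \<in> g \<and> y \<in> lcs br g (Suc k)} \<subseteq> lcs br g (Suc k)"
    using lcs_sub[of "Suc k"] by (rule span_minimal)
  then show ?case by (simp only: lcs.simps)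
qed

lemma nil_trace:
  assumes T: "linear T" and low: "\<And>k x. x \<in> lcs br g k \<Longrightarrow> T x \<in> lcs br g (Suc k)"
  shows "trace_on g T = 0"
proof -
  have tk: "trace_on g T = trace_on (lcs br g k) T" for k
  proof (induction k)
    case 0 then show ?case by simp
  next
    case (Suc k)
    have "T ` lcs br g k \<subseteq> lcs br g (Suc k)" using low by blast
    then have "trace_on (lcs br g k) T = trace_on (lcs br g (Suc k)) T"
      by (intro trace_filtr[OF lcs_sub lcs_sub lcs_mono T])
    then show ?case using Suc by simp
  qed
  obtain n where n: "lcs br g n = {0}" using nil by blast
  show ?thesis using tk[of n] unfolding n trace_zero_space .
qed

end

context PI begin

definition "pg = (SOME p. dualfam g m (fst p) (snd p) \<and> 0 \<notin> fst p)"
definition "Bg = fst pg"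
definition "fg = snd pg"
definition "pa = (SOME p. dualfam a m (fst p) (snd p) \<and> 0 \<notin> fst p)"
definition "Ba = fst pa"
definition "fa = snd pa"

lemma dfg: "dualfam g m Bg fg" "0 \<notin> Bg"
proof -
  obtain B f where "dualfam g m B f \<and> 0 \<notin> B"
    using dualfam_exists[OF gsub mb] msym ndg by blast
  then have "dualfam g m (fst pg) (snd pg) \<and> 0 \<notin> fst pg"
    unfolding pg_def using someI[where P="\<lambda>p. dualfam g m (fst p) (snd p) \<and> 0 \<notin> fst p" and x="(B, f)"] by simp
  then show "dualfam g m Bg fg" "0 \<notin> Bg" unfolding Bg_def fg_def by auto
qed

lemma dfa: "dualfam a m Ba fa" "0 \<notin> Ba"
proof -
  obtain B f where "dualfam a m B f \<and> 0 \<notin> B"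
    using dualfam_exists[OF asub mb] msym nda by blast
  then have "dualfam a m (fst pa) (snd pa) \<and> 0 \<notin> fst pa"
    unfolding pa_def using someI[where P="\<lambda>p. dualfam a m (fst p) (snd p) \<and> 0 \<notin> fst p" and x="(B, f)"] by simp
  then show "dualfam a m Ba fa" "0 \<notin> Ba" unfolding Ba_def fa_def by auto
qed

lemma finBg: "finite Bg" and Bgg: "Bg \<subseteq> g" and fgg: "\<And>b. b \<in> Bg \<Longrightarrow> fg b \<in> g"
  and rg1: "\<And>x. x \<in> g \<Longrightarrow> x = (\<Sum>b\<in>Bg. m x (fg b) *\<^sub>R b)"
  and rg2: "\<And>x. x \<in> g \<Longrightarrow> x = (\<Sum>b\<in>Bg. m x b *\<^sub>R fg b)"
  using dfg(1) unfolding dualfam_def by blast+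

lemma finBa: "finite Ba" and Baa: "Ba \<subseteq> a" and faa: "\<And>b. b \<in> Ba \<Longrightarrow> fa b \<in> a"
  and ra1: "\<And>x. x \<in> a \<Longrightarrow> x = (\<Sum>b\<in>Ba. m x (fa b) *\<^sub>R b)"
  and ra2: "\<And>x. x \<in> a \<Longrightarrow> x = (\<Sum>b\<in>Ba. m x b *\<^sub>R fa b)"
  using dfa(1) unfolding dualfam_def by blast+

lemma disj: "Bg \<inter> Ba = {}"
proof -
  have False if "x \<in> Bg" "x \<in> Ba" for x
  proof -
    have "x \<in> g \<inter> a" using that Bgg Baa by blast
    then have "x = 0" using ga0 by simp
    then show False using dfg(2) that(1) by simp
  qed
  then show ?thesis by blast
qed

definition "Bu = Bg \<union> Ba"
definition "fu b = (if b \<in> Bg then fg b else fa b)"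

lemma sum_u: "(\<Sum>b\<in>Bu. F b) = (\<Sum>b\<in>Bg. F b) + (\<Sum>b\<in>Ba. F b)"
  unfolding Bu_def using finBg finBa disj by (rule sum.union_disjoint)

lemma sum_u': "(\<Sum>b\<in>Bu. F b (fu b)) = (\<Sum>b\<in>Bg. F b (fg b)) + (\<Sum>b\<in>Ba. F b (fa b))"
proof -
  have "(\<Sum>b\<in>Ba. F b (fu b)) = (\<Sum>b\<in>Ba. F b (fa b))"
    using disj by (intro sum.cong) (auto simp: fu_def)
  moreover have "(\<Sum>b\<in>Bg. F b (fu b)) = (\<Sum>b\<in>Bg. F b (fg b))"
    by (intro sum.cong) (auto simp: fu_def)
  ultimately show ?thesis by (simp add: sum_u)
qed

lemma dfu: "dualfam UNIV m Bu fu"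
  unfolding dualfam_def
proof (intro conjI ballI)
  show "finite Bu" using finBg finBa by (simp add: Bu_def)
  show "Bu \<subseteq> UNIV" "fu ` Bu \<subseteq> UNIV" by auto
next
  fix x :: 'a
  obtain v X where v: "v \<in> g" "X \<in> a" "x = v + X" using dec by blast
  have e1: "(\<Sum>b\<in>Bg. m x (fg b) *\<^sub>R b) = v"
  proof -
    have "(\<Sum>b\<in>Bg. m x (fg b) *\<^sub>R b) = (\<Sum>b\<in>Bg. m v (fg b) *\<^sub>R b)"
      using v fgg orth' by (intro sum.cong) (auto simp: bilinear_ladd[OF mb])
    also have "\<dots> = v" using rg1[OF v(1), symmetric] by simp
    finally show ?thesis .
  qed
  have e2: "(\<Sum>b\<in>Ba. m x (fa b) *\<^sub>R b) = X"
  proof -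
    have "(\<Sum>b\<in>Ba. m x (fa b) *\<^sub>R b) = (\<Sum>b\<in>Ba. m X (fa b) *\<^sub>R b)"
      using v faa orth by (intro sum.cong) (auto simp: bilinear_ladd[OF mb])
    also have "\<dots> = X" using ra1[OF v(2), symmetric] by simp
    finally show ?thesis .
  qed
  have "(\<Sum>b\<in>Bu. m x (fu b) *\<^sub>R b) = v + X"
    using sum_u'[of "\<lambda>b c. m x c *\<^sub>R b"] e1 e2 by simp
  then show "x = (\<Sum>b\<in>Bu. m x (fu b) *\<^sub>R b)" using v(3) by metis
  have e3: "(\<Sum>b\<in>Bg. m x b *\<^sub>R fg b) = v"
  proof -
    have "(\<Sum>b\<in>Bg. m x b *\<^sub>R fg b) = (\<Sum>b\<in>Bg. m v b *\<^sub>R fg b)"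
      using v Bgg orth' by (intro sum.cong) (auto simp: bilinear_ladd[OF mb])
    also have "\<dots> = v" using rg2[OF v(1), symmetric] by simp
    finally show ?thesis .
  qed
  have e4: "(\<Sum>b\<in>Ba. m x b *\<^sub>R fa b) = X"
  proof -
    have "(\<Sum>b\<in>Ba. m x b *\<^sub>R fa b) = (\<Sum>b\<in>Ba. m X b *\<^sub>R fa b)"
      using v Baa orth by (intro sum.cong) (auto simp: bilinear_ladd[OF mb])
    also have "\<dots> = X" using ra2[OF v(2), symmetric] by simp
    finally show ?thesis .
  qed
  have "(\<Sum>b\<in>Bu. m x b *\<^sub>R fu b) = v + X"
    using sum_u'[of "\<lambda>b c. m x b *\<^sub>R c"] e3 e4 by simp
  then show "x = (\<Sum>b\<in>Bu. m x b *\<^sub>R fu b)" using v(3) by metis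
qed

lemma trace_u:
  assumes "linear T"
  shows "trace_on UNIV T = (\<Sum>b\<in>Bg. m (T b) (fg b)) + (\<Sum>b\<in>Ba. m (T b) (fa b))"
proof -
  have "trace_on UNIV T = (\<Sum>b\<in>Bu. m (T b) (fu b))"
    using assms by (intro trace_df(1)[OF subspace_UNIV mb dfu]) (auto intro: lin_on_linear)
  then show ?thesis using sum_u'[of "\<lambda>b c. m (T b) c"] by simp
qed

lemma trace_g:
  assumes "lin_on g T" "\<And>x. x \<in> g \<Longrightarrow> T x \<in> g"
  shows "trace_on g T = (\<Sum>b\<in>Bg. m (T b) (fg b))" "trace_on g T = (\<Sum>b\<in>Bg. m (T (fg b)) b)"
  using assms trace_df[OF gsub mb dfg(1)] by auto

end

sublocale PI \<subseteq> U: nab UNIV br m Bu fu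
  by unfold_locales (auto simp: subspace_UNIV mb brb msym intro: mnd dfu)

sublocale PI \<subseteq> G: nab g br m Bg fg
  by unfold_locales (auto simp: gsub mb brb msym ndg dfg)

context PI begin

abbreviation "N \<equiv> lc_nabla UNIV br m"
abbreviation "D \<equiv> lc_nabla g br m"

definition "A v w = (SOME z. z \<in> a \<and> (\<forall>X\<in>a. m z X = m (br X v) w))"

lemma A: "A v w \<in> a" "X \<in> a \<Longrightarrow> m (A v w) X = m (br X v) w"
proof -
  have l: "lin_on a (\<lambda>X. m (br X v) w)"
    by (rule lin_on_linear) (simp add: linearI bilinear_ladd[OF brb] bilinear_ladd[OF mb]
        bilinear_lmul[OF brb] bilinear_lmul[OF mb])
  obtain z where "z \<in> a" "\<forall>X\<in>a. m z X = m (br X v) w"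
    using riesz[OF asub mb _ dfa(1) l] msym by blast
  then have "A v w \<in> a \<and> (\<forall>X\<in>a. m (A v w) X = m (br X v) w)"
    unfolding A_def using someI[where P="\<lambda>z. z \<in> a \<and> (\<forall>X\<in>a. m z X = m (br X v) w)" and x=z] by blast
  then show "A v w \<in> a" "X \<in> a \<Longrightarrow> m (A v w) X = m (br X v) w" by auto
qed

lemma mzero: "m 0 x = 0" "m x 0 = 0"
  by (simp_all add: bilinear_lzero[OF mb] bilinear_rzero[OF mb])

lemma N1: assumes X: "X \<in> a" shows "N X u = 0"
proof (rule U.nabla_char)
  show "(0::'a) \<in> UNIV" by simp
  show "\<forall>x\<in>UNIV. 2 * m 0 x = kos br m X u x"
  proof
    fix x :: 'a
    have "m (br u x) X = 0" using orth[OF brg X] .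
    moreover have "m (br x X) u = - m (br X u) x"
    proof -
      have "m (br x X) u = m (- br X x) u" using anti[of x X] by simp
      also have "\<dots> = - m (br X x) u" by (simp add: bilinear_lneg[OF mb])
      also have "m (br X x) u = m x (br X u)" using sa[OF X] .
      also have "\<dots> = m (br X u) x" by (rule msym)
      finally show ?thesis .
    qed
    ultimately show "2 * m 0 x = kos br m X u x" by (simp add: kos_def mzero)
  qed
qed

lemma N2: assumes Y: "Y \<in> a" shows "N u Y = br u Y"
proof (rule U.nabla_char)
  show "br u Y \<in> UNIV" by simp
  show "\<forall>x\<in>UNIV. 2 * m (br u Y) x = kos br m u Y x"
  proof
    fix x :: 'a
    have "m (br x u) Y = 0" using orth[OF brg Y] .
    moreover have "m (br Y x) u = - m (br u Y) x"
    proof -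
      have "m (br Y x) u = m x (br Y u)" using sa[OF Y] .
      also have "\<dots> = m x (- br u Y)" using anti[of Y u] by simp
      also have "\<dots> = - m (br u Y) x" by (simp add: bilinear_rneg[OF mb] msym)
      finally show ?thesis .
    qed
    ultimately show "2 * m (br u Y) x = kos br m u Y x" by (simp add: kos_def)
  qed
qed

lemma kos_add: "kos br m u v (x + y) = kos br m u v x + kos br m u v y"
  by (simp add: kos_def bilinear_radd[OF mb] bilinear_ladd[OF mb] bilinear_radd[OF brb] bilinear_ladd[OF brb])

lemma N3: assumes v: "v \<in> g" and w: "w \<in> g" shows "N v w = D v w + A v w"
proof (rule U.nabla_char)
  show "D v w + A v w \<in> UNIV" by simp
  show "\<forall>x\<in>UNIV. 2 * m (D v w + A v w) x = kos br m v w x"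
  proof
    fix x :: 'a
    obtain xg xa where xs: "xg \<in> g" "xa \<in> a" "x = xg + xa" using dec by blast
    have Dg: "D v w \<in> g" by (rule G.nabla(1))
    have "m (D v w + A v w) x = m (D v w) xg + m (A v w) xa"
      using xs orth[OF Dg xs(2)] orth'[OF xs(1) A(1)]
      by (simp add: bilinear_ladd[OF mb] bilinear_radd[OF mb])
    moreover have "2 * m (D v w) xg = kos br m v w xg" using G.nabla(2) xs(1) by blast
    moreover have "m (A v w) xa = m (br xa v) w" using A(2)[OF xs(2)] .
    moreover have "kos br m v w xa = 2 * m (br xa v) w"
    proof -
      have "m (br v w) xa = 0" using orth[OF brg xs(2)] .
      moreover have "m (br w xa) v = - m (br xa v) w"
      proof -
        have "m (br w xa) v = m (- br xa w) v" using anti[of w xa] by simp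
        also have "\<dots> = - m (br xa w) v" by (simp add: bilinear_lneg[OF mb])
        also have "m (br xa w) v = m w (br xa v)" using sa[OF xs(2)] .
        also have "\<dots> = m (br xa v) w" by (rule msym)
        finally show ?thesis .
      qed
      ultimately show ?thesis by (simp add: kos_def)
    qed
    moreover have "kos br m v w x = kos br m v w xg + kos br m v w xa" using xs(3) kos_add by simp
    ultimately show "2 * m (D v w + A v w) x = kos br m v w x" by (simp add: algebra_simps)
  qed
qed

lemma Nbil: "bilinear N" by (rule U.nabla_bil)
lemma Dbil: "bilinear D" by (rule G.nabla_bil)

lemma curv_lin: "linear (\<lambda>x. curv UNIV br m x v w)"
  unfolding curv_def
  by (rule linearI) (simp_all add: bilinear_ladd[OF Nbil] bilinear_radd[OF Nbil] bilinear_ladd[OF brb]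
      bilinear_lmul[OF Nbil] bilinear_rmul[OF Nbil] bilinear_lmul[OF brb] algebra_simps)

lemma curvg_lin: "linear (\<lambda>x. curv g br m x v w)"
  unfolding curv_def
  by (rule linearI) (simp_all add: bilinear_ladd[OF Dbil] bilinear_radd[OF Dbil] bilinear_ladd[OF brb]
      bilinear_lmul[OF Dbil] bilinear_rmul[OF Dbil] bilinear_lmul[OF brb] algebra_simps)

lemma curvg_in: "curv g br m x v w \<in> g"
  unfolding curv_def using G.nabla(1) gsub by (simp add: subspace_diff)

lemma trace_neg: fixes T :: "'a \<Rightarrow> 'a" assumes "linear T" shows "trace_on UNIV (\<lambda>x. - T x) = - trace_on UNIV T"
proof -
  have l: "linear (\<lambda>x. - T x)" by (rule linear_compose_neg[OF assms])
  show ?thesis using trace_u[OF l] trace_u[OF assms]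
    by (simp add: bilinear_lneg[OF mb] sum_negf)
qed

lemma case3: assumes X: "X \<in> a" and Y: "Y \<in> a"
  shows "ricci UNIV br m X Y = - trace_on UNIV (br X \<circ> br Y)"
proof -
  have "curv UNIV br m x X Y = - (br X \<circ> br Y) x" for x
  proof -
    have "N X Y = 0" using N1[OF X] .
    moreover have "N x (0::'a) = 0" by (simp add: bilinear_rzero[OF Nbil])
    moreover have "N (br x X) Y = br (br x X) Y" using N2[OF Y] .
    moreover have "br (br x X) Y = br X (br Y x)"
    proof -
      have e1: "br (br x X) Y = - br Y (br x X)" by (rule anti)
      have "br Y (br x X) = br Y (- br X x)" using anti[of x X] by (rule arg_cong)
      then have e2: "br Y (br x X) = - br Y (br X x)" by (simp add: bilinear_rneg[OF brb])
      have e3: "br Y (br X x) = br X (br Y x)"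
        using jac2[of Y X x] aab[OF Y X] by (simp add: bilinear_lzero[OF brb])
      show ?thesis using e1 e2 e3 by simp
    qed
    ultimately show ?thesis unfolding curv_def using N1[OF X] by simp
  qed
  then have eqf: "(\<lambda>x. curv UNIV br m x X Y) = (\<lambda>x. - (br X \<circ> br Y) x)" by blast
  have "linear (br X \<circ> br Y)" using brb by (intro linear_compose) (auto simp: bilinear_def)
  then have "trace_on UNIV (\<lambda>x. - (br X \<circ> br Y) x) = - trace_on UNIV (br X \<circ> br Y)"
    by (rule trace_neg)
  then show ?thesis unfolding ricci_def using eqf by simp
qed

end

context PI begin

lemma msumL: "m (sum F S) u = (\<Sum>b\<in>S. m (F b) u)"
proof -
  have "linear (\<lambda>x. m x u)" using mb by (simp add: bilinear_def)
  then show ?thesis by (rule linear_sum)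
qed

lemma brsumL: "br (sum F S) u = (\<Sum>b\<in>S. br (F b) u)"
proof -
  have "linear (\<lambda>x. br x u)" using brb by (simp add: bilinear_def)
  then show ?thesis by (rule linear_sum)
qed

lemma brsumR: "br u (sum F S) = (\<Sum>b\<in>S. br u (F b))"
proof -
  have "linear (br u)" using brb by (simp add: bilinear_def)
  then show ?thesis by (rule linear_sum)
qed

lemma self_neg_zero: fixes x :: 'a shows "x = - x \<Longrightarrow> x = 0"
proof -
  assume h: "x = - x"
  have "x + x = - x + x" using h by (rule arg_cong[where f="\<lambda>t. t + x"])
  then have "x + x = 0" by (simp only: add.left_inverse)
  then have "2 *\<^sub>R x = 0" by (simp add: scaleR_2)
  then show "x = 0" by simp
qed

lemma Z1: "(\<Sum>b\<in>Bg. br (fg b) b) = 0"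
proof -
  let ?M = "\<lambda>b c. m (fg b) (fg c)"
  let ?T = "\<Sum>b\<in>Bg. \<Sum>c\<in>Bg. ?M b c *\<^sub>R br c b"
  have e1: "(\<Sum>b\<in>Bg. br (fg b) b) = ?T"
  proof (rule sum.cong[OF refl])
    fix b assume b: "b \<in> Bg"
    have "br (fg b) b = br (\<Sum>c\<in>Bg. ?M b c *\<^sub>R c) b"
      by (rule arg_cong[where f="\<lambda>t. br t b", OF rg1[OF fgg[OF b]]])
    also have "\<dots> = (\<Sum>c\<in>Bg. ?M b c *\<^sub>R br c b)" by (simp add: brsumL bilinear_lmul[OF brb])
    finally show "br (fg b) b = (\<Sum>c\<in>Bg. ?M b c *\<^sub>R br c b)" .
  qed
  have "?T = (\<Sum>c\<in>Bg. \<Sum>b\<in>Bg. ?M b c *\<^sub>R br c b)"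
    by (rule sum.swap)
  also have "\<dots> = (\<Sum>c\<in>Bg. \<Sum>b\<in>Bg. - (?M c b *\<^sub>R br b c))"
  proof (intro sum.cong refl)
    fix b c
    have "?M b c = ?M c b" by (rule msym)
    moreover have "br c b = - br b c" by (rule anti)
    ultimately show "?M b c *\<^sub>R br c b = - (?M c b *\<^sub>R br b c)" by simp
  qed
  also have "\<dots> = - ?T"
    by (simp only: sum_negf)
  finally have "?T = - ?T" .
  then have "?T = 0" by (rule self_neg_zero)
  then show ?thesis using e1 by simp
qed

lemma Z2: assumes X: "X \<in> a"
  shows "(\<Sum>b\<in>Bg. br (br X b) (fg b)) = (\<Sum>b\<in>Bg. br b (br X (fg b)))"
proof -
  let ?M = "\<lambda>b c. m (br X b) (fg c)"
  have "(\<Sum>b\<in>Bg. br (br X b) (fg b)) = (\<Sum>b\<in>Bg. \<Sum>c\<in>Bg. ?M b c *\<^sub>R br c (fg b))"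
  proof (rule sum.cong[OF refl])
    fix b assume b: "b \<in> Bg"
    have "br (br X b) (fg b) = br (\<Sum>c\<in>Bg. ?M b c *\<^sub>R c) (fg b)"
      by (rule arg_cong[where f="\<lambda>t. br t (fg b)", OF rg1[OF gid]]) (use b Bgg in auto)
    also have "\<dots> = (\<Sum>c\<in>Bg. ?M b c *\<^sub>R br c (fg b))" by (simp add: brsumL bilinear_lmul[OF brb])
    finally show "br (br X b) (fg b) = (\<Sum>c\<in>Bg. ?M b c *\<^sub>R br c (fg b))" .
  qed
  also have "\<dots> = (\<Sum>c\<in>Bg. \<Sum>b\<in>Bg. ?M b c *\<^sub>R br c (fg b))" by (rule sum.swap)
  also have "\<dots> = (\<Sum>c\<in>Bg. br c (\<Sum>b\<in>Bg. m (br X (fg c)) b *\<^sub>R fg b))"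
  proof (rule sum.cong[OF refl])
    fix c
    have "(\<Sum>b\<in>Bg. ?M b c *\<^sub>R br c (fg b)) = (\<Sum>b\<in>Bg. m (br X (fg c)) b *\<^sub>R br c (fg b))"
    proof (rule sum.cong[OF refl])
      fix b
      have "?M b c = m b (br X (fg c))" using sa[OF X] .
      also have "\<dots> = m (br X (fg c)) b" by (rule msym)
      finally show "?M b c *\<^sub>R br c (fg b) = m (br X (fg c)) b *\<^sub>R br c (fg b)" by simp
    qed
    also have "\<dots> = br c (\<Sum>b\<in>Bg. m (br X (fg c)) b *\<^sub>R fg b)" by (simp add: brsumR bilinear_rmul[OF brb])
    finally show "(\<Sum>b\<in>Bg. ?M b c *\<^sub>R br c (fg b)) = br c (\<Sum>b\<in>Bg. m (br X (fg c)) b *\<^sub>R fg b)" .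
  qed
  also have "\<dots> = (\<Sum>c\<in>Bg. br c (br X (fg c)))"
  proof (rule sum.cong[OF refl])
    fix c assume c: "c \<in> Bg"
    have "br X (fg c) = (\<Sum>b\<in>Bg. m (br X (fg c)) b *\<^sub>R fg b)" by (rule rg2[OF gid[OF fgg[OF c]]])
    then show "br c (\<Sum>b\<in>Bg. m (br X (fg c)) b *\<^sub>R fg b) = br c (br X (fg c))" by (simp only:)
  qed
  finally show ?thesis .
qed

lemma Z1': "(\<Sum>b\<in>Bg. br b (fg b)) = 0"
proof -
  have "(\<Sum>b\<in>Bg. br b (fg b)) = (\<Sum>b\<in>Bg. - br (fg b) b)" by (intro sum.cong refl) (rule anti)
  also have "\<dots> = 0" by (simp only: sum_negf Z1 neg_0_equal_iff_equal) simp
  finally show ?thesis .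
qed

lemma Z3: assumes X: "X \<in> a" shows "(\<Sum>b\<in>Bg. br (br b X) (fg b)) = 0"
proof -
  let ?P = "\<Sum>b\<in>Bg. br (br X b) (fg b)"
  have "br X (\<Sum>b\<in>Bg. br b (fg b)) = (\<Sum>b\<in>Bg. br (br X b) (fg b) + br b (br X (fg b)))"
    unfolding brsumR by (intro sum.cong refl) (rule jac2)
  also have "\<dots> = ?P + ?P" using Z2[OF X] by (simp add: sum.distrib)
  finally have "?P + ?P = 0" using Z1' by (simp add: bilinear_rzero[OF brb])
  then have "2 *\<^sub>R ?P = 0" by (simp add: scaleR_2)
  then have P0: "?P = 0" by simp
  have "(\<Sum>b\<in>Bg. br (br b X) (fg b)) = (\<Sum>b\<in>Bg. - br (br X b) (fg b))"
  proof (intro sum.cong refl)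
    fix b
    have "br b X = - br X b" by (rule anti)
    then show "br (br b X) (fg b) = - br (br X b) (fg b)" by (simp add: bilinear_lneg[OF brb])
  qed
  also have "\<dots> = - ?P" by (simp only: sum_negf)
  finally show ?thesis using P0 by simp
qed

lemma tr0:
  assumes T: "linear T" and low: "\<And>k x. x \<in> lcs br g k \<Longrightarrow> T x \<in> lcs br g (Suc k)"
  shows "(\<Sum>b\<in>Bg. m (T b) (fg b)) = 0" "(\<Sum>b\<in>Bg. m (T (fg b)) b) = 0"
proof -
  have tz: "trace_on g T = 0" by (rule nil_trace[OF T low])
  have Tg: "T x \<in> g" if "x \<in> g" for x
    using low[of x 0] that lcs_g[of 1] by auto
  have "lin_on g T" using T by (rule lin_on_linear)
  then show "(\<Sum>b\<in>Bg. m (T b) (fg b)) = 0" "(\<Sum>b\<in>Bg. m (T (fg b)) b) = 0"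
    using trace_g[of T] Tg tz by auto
qed

lemma lcs_neg: "x \<in> lcs br g k \<Longrightarrow> - x \<in> lcs br g k"
  using lcs_sub by (rule subspace_neg)

lemmas bil = bilinear_ladd[OF brb] bilinear_radd[OF brb] bilinear_lmul[OF brb] bilinear_rmul[OF brb]

lemma brX_low: "x \<in> lcs br g k \<Longrightarrow> br x X \<in> lcs br g k"
proof -
  assume x: "x \<in> lcs br g k"
  have "br x X = - br X x" by (rule anti)
  then show ?thesis using lcs_neg[OF lcs_ad[OF x]] by simp
qed

lemma K1: assumes u: "u \<in> g" shows "(\<Sum>b\<in>Bg. kos br m b u (fg b)) = 0"
proof -
  have "(\<Sum>b\<in>Bg. kos br m b u (fg b)) =
     (\<Sum>b\<in>Bg. m (br b u) (fg b)) - (\<Sum>b\<in>Bg. m (br u (fg b)) b) + m (\<Sum>b\<in>Bg. br (fg b) b) u"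
    by (simp add: kos_def sum_subtractf sum.distrib msumL)
  moreover have "(\<Sum>b\<in>Bg. m (br b u) (fg b)) = 0"
    apply (rule tr0(1)[of "\<lambda>e. br e u"])
    subgoal by (rule linearI) (simp_all add: bil)
    by (rule lcs_br'[OF u])
  moreover have "(\<Sum>b\<in>Bg. m (br u (fg b)) b) = 0"
    apply (rule tr0(2)[of "br u"])
    subgoal by (rule linearI) (simp_all add: bil)
    by (rule lcs_br[OF u])
  ultimately show ?thesis by (simp add: Z1 mzero)
qed

lemma K2: assumes v: "v \<in> g" and X: "X \<in> a" shows "(\<Sum>b\<in>Bg. kos br m v (br b X) (fg b)) = 0"
proof -
  have "(\<Sum>b\<in>Bg. kos br m v (br b X) (fg b)) =
     (\<Sum>b\<in>Bg. m (br v (br b X)) (fg b)) - m (\<Sum>b\<in>Bg. br (br b X) (fg b)) v + (\<Sum>b\<in>Bg. m (br (fg b) v) (br b X))"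
    by (simp add: kos_def sum_subtractf sum.distrib msumL)
  moreover have "(\<Sum>b\<in>Bg. m (br v (br b X)) (fg b)) = 0"
    apply (rule tr0(1)[of "\<lambda>e. br v (br e X)"])
    subgoal by (rule linearI) (simp_all add: bil)
    by (rule lcs_br[OF v brX_low])
  moreover have "(\<Sum>b\<in>Bg. m (br (fg b) v) (br b X)) = - (\<Sum>b\<in>Bg. m (br X (br (fg b) v)) b)"
  proof -
    have "m (br (fg b) v) (br b X) = - m (br X (br (fg b) v)) b" for b
    proof -
      have "br b X = - br X b" by (rule anti)
      then have "m (br (fg b) v) (br b X) = - m (br (fg b) v) (br X b)" by (simp add: bilinear_rneg[OF mb])
      also have "m (br (fg b) v) (br X b) = m (br X (br (fg b) v)) b" using sa[OF X] by simp
      finally show ?thesis .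
    qed
    then show ?thesis by (simp add: sum_negf)
  qed
  moreover have "(\<Sum>b\<in>Bg. m (br X (br (fg b) v)) b) = 0"
    apply (rule tr0(2)[of "\<lambda>e. br X (br e v)"])
    subgoal by (rule linearI) (simp_all add: bil)
    by (rule lcs_ad[OF lcs_br'[OF v]])
  ultimately show ?thesis by (simp add: Z3[OF X] mzero)
qed

lemma K3: assumes v: "v \<in> g" shows "(\<Sum>b\<in>Bg. m (br (br b v) X) (fg b)) = 0"
  apply (rule tr0(1)[of "\<lambda>e. br (br e v) X"])
  subgoal by (rule linearI) (simp_all add: bil)
  by (rule brX_low[OF lcs_br'[OF v]])

lemma case2: assumes v: "v \<in> g" and X: "X \<in> a" shows "ricci UNIV br m v X = 0"
proof -
  let ?R = "\<lambda>x. curv UNIV br m x v X"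
  have tr: "ricci UNIV br m v X = (\<Sum>b\<in>Bg. m (?R b) (fg b)) + (\<Sum>b\<in>Ba. m (?R b) (fa b))"
    unfolding ricci_def by (rule trace_u[OF curv_lin])
  have Ra: "m (?R c) (fa c) = 0" if c: "c \<in> Ba" for c
  proof -
    have ca: "c \<in> a" using c Baa by blast
    have "?R c = N c (N v X) - N v (N c X) - N (br c v) X" by (simp add: curv_def)
    also have "\<dots> = - br (br c v) X"
      using N1[OF ca] N2[OF X] aab[OF ca X] by (simp add: bilinear_rzero[OF Nbil])
    finally have "m (?R c) (fa c) = - m (br (br c v) X) (fa c)" by (simp add: bilinear_lneg[OF mb])
    then show ?thesis using orth[OF brg faa[OF c]] by simp
  qed
  have Rg: "2 * m (?R b) (fg b) = kos br m b (br v X) (fg b) - kos br m v (br b X) (fg b)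
       - 2 * m (br (br b v) X) (fg b)" if b: "b \<in> Bg" for b
  proof -
    have bg: "b \<in> g" using b Bgg by blast
    have fb: "fg b \<in> g" using fgg[OF b] .
    have "?R b = N b (N v X) - N v (N b X) - N (br b v) X" by (simp add: curv_def)
    also have "\<dots> = N b (br v X) - N v (br b X) - br (br b v) X" using N2[OF X] by simp
    also have "\<dots> = (D b (br v X) + A b (br v X)) - (D v (br b X) + A v (br b X)) - br (br b v) X"
      using N3[OF bg brg] N3[OF v brg] by simp
    finally have "m (?R b) (fg b) = m (D b (br v X)) (fg b) + m (A b (br v X)) (fg b)
        - m (D v (br b X)) (fg b) - m (A v (br b X)) (fg b) - m (br (br b v) X) (fg b)"
      by (simp add: bilinear_ladd[OF mb] bilinear_lsub[OF mb])
    moreover have "m (A b (br v X)) (fg b) = 0" "m (A v (br b X)) (fg b) = 0"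
      using orth'[OF fb A(1)] by auto
    moreover have "2 * m (D b (br v X)) (fg b) = kos br m b (br v X) (fg b)"
      using G.nabla(2) fb by blast
    moreover have "2 * m (D v (br b X)) (fg b) = kos br m v (br b X) (fg b)"
      using G.nabla(2) fb by blast
    ultimately show ?thesis by (simp add: algebra_simps)
  qed
  have "2 * (\<Sum>b\<in>Bg. m (?R b) (fg b)) = (\<Sum>b\<in>Bg. 2 * m (?R b) (fg b))"
    by (simp add: sum_distrib_left)
  also have "\<dots> = (\<Sum>b\<in>Bg. kos br m b (br v X) (fg b)) - (\<Sum>b\<in>Bg. kos br m v (br b X) (fg b))
       - 2 * (\<Sum>b\<in>Bg. m (br (br b v) X) (fg b))"
    using Rg by (simp add: sum_subtractf sum_distrib_left)
  also have "\<dots> = 0" using K1[OF brg] K2[OF v X] K3[OF v] by simp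
  finally have "(\<Sum>b\<in>Bg. m (?R b) (fg b)) = 0" by simp
  moreover have "(\<Sum>b\<in>Ba. m (?R b) (fa b)) = 0" using Ra by simp
  ultimately show ?thesis using tr by simp
qed

lemma Ha: assumes hH: "\<forall>v. m H v = trace_on UNIV (br v)" shows "H \<in> a"
proof -
  have tz: "m H u = 0" if u: "u \<in> g" for u
  proof -
    have lin: "linear (br u)" using brb by (simp add: bilinear_def)
    have "trace_on UNIV (br u) = trace_on g (br u)"
      by (rule trace_filtr[OF subspace_UNIV gsub _ lin]) (auto intro: brg)
    also have "\<dots> = 0" by (rule nil_trace[OF lin lcs_br[OF u]])
    finally show ?thesis using hH by simp
  qed
  obtain Hg Ha where h: "Hg \<in> g" "Ha \<in> a" "H = Hg + Ha" using dec by blast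
  have "\<forall>y\<in>g. m Hg y = 0"
  proof
    fix y assume y: "y \<in> g"
    have "m H y = m Hg y + m Ha y" using h(3) by (simp add: bilinear_ladd[OF mb])
    then show "m Hg y = 0" using tz[OF y] orth'[OF y h(2)] by simp
  qed
  then have "Hg = 0" using ndg h(1) by blast
  then show ?thesis using h by simp
qed

lemma case1: assumes v: "v \<in> g" and w: "w \<in> g" and hH: "\<forall>v. m H v = trace_on UNIV (br v)"
  shows "ricci UNIV br m v w = ricci g br m v w - m (br H v) w"
proof -
  let ?R = "\<lambda>x. curv UNIV br m x v w"
  let ?Rg = "\<lambda>x. curv g br m x v w"
  define q where "q = A v w"
  have qa: "q \<in> a" unfolding q_def by (rule A(1))
  have tr: "ricci UNIV br m v w = (\<Sum>b\<in>Bg. m (?R b) (fg b)) + (\<Sum>b\<in>Ba. m (?R b) (fa b))"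
    unfolding ricci_def by (rule trace_u[OF curv_lin])
  have trg: "ricci g br m v w = (\<Sum>b\<in>Bg. m (?Rg b) (fg b))"
    unfolding ricci_def by (rule trace_g(1)) (auto intro: lin_on_linear curvg_lin curvg_in)
  have Ra: "m (?R c) (fa c) = - m (br (fa c) (br c v)) w" if c: "c \<in> Ba" for c
  proof -
    have ca: "c \<in> a" using c Baa by blast
    have "?R c = N c (N v w) - N v (N c w) - N (br c v) w" by (simp add: curv_def)
    also have "\<dots> = - (D (br c v) w + A (br c v) w)"
      using N1[OF ca] N3[OF brg w] by (simp add: bilinear_rzero[OF Nbil])
    finally have "m (?R c) (fa c) = - m (D (br c v) w) (fa c) - m (A (br c v) w) (fa c)"
      by (simp add: bilinear_lneg[OF mb] bilinear_ladd[OF mb] bilinear_lsub[OF mb])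
    moreover have "m (D (br c v) w) (fa c) = 0" using orth[OF G.nabla(1) faa[OF c]] .
    moreover have "m (A (br c v) w) (fa c) = m (br (fa c) (br c v)) w" using A(2)[OF faa[OF c]] .
    ultimately show ?thesis by simp
  qed
  have Rg: "m (?R b) (fg b) = m (?Rg b) (fg b) + m (br b q) (fg b) - m (br v (A b w)) (fg b)"
    if b: "b \<in> Bg" for b
  proof -
    have bg: "b \<in> g" using b Bgg by blast
    have fb: "fg b \<in> g" using fgg[OF b] .
    have Dvw: "D v w \<in> g" "D b w \<in> g" by (rule G.nabla(1))+
    have "?R b = N b (N v w) - N v (N b w) - N (br b v) w" by (simp add: curv_def)
    also have "\<dots> = N b (D v w + q) - N v (D b w + A b w) - (D (br b v) w + A (br b v) w)"
      using N3[OF v w] N3[OF bg w] N3[OF brg w] by (simp add: q_def)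
    also have "\<dots> = (D b (D v w) + A b (D v w) + br b q) - (D v (D b w) + A v (D b w) + br v (A b w))
         - (D (br b v) w + A (br b v) w)"
      using N3[OF bg Dvw(1)] N3[OF v Dvw(2)] N2[OF qa] N2[OF A(1)]
      by (simp add: bilinear_radd[OF Nbil])
    also have "\<dots> = ?Rg b + br b q - br v (A b w) + (A b (D v w) - A v (D b w) - A (br b v) w)"
      by (simp add: curv_def algebra_simps)
    finally have "m (?R b) (fg b) = m (?Rg b) (fg b) + m (br b q) (fg b) - m (br v (A b w)) (fg b)
        + (m (A b (D v w)) (fg b) - m (A v (D b w)) (fg b) - m (A (br b v) w) (fg b))"
      by (simp add: bilinear_ladd[OF mb] bilinear_lsub[OF mb])
    moreover have "m (A b (D v w)) (fg b) = 0" "m (A v (D b w)) (fg b) = 0" "m (A (br b v) w) (fg b) = 0"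
      using orth'[OF fb A(1)] by auto
    ultimately show ?thesis by simp
  qed
  have Hterm: "(\<Sum>b\<in>Bg. m (br b q) (fg b)) = - m (br H v) w"
  proof -
    have lin: "linear (br q)" using brb by (simp add: bilinear_def)
    have "trace_on UNIV (br q) = (\<Sum>b\<in>Bg. m (br q b) (fg b)) + (\<Sum>b\<in>Ba. m (br q b) (fa b))"
      by (rule trace_u[OF lin])
    moreover have "(\<Sum>b\<in>Ba. m (br q b) (fa b)) = 0"
      using aab[OF qa] Baa by (auto intro!: sum.neutral simp: mzero)
    moreover have "trace_on UNIV (br q) = m (br H v) w"
    proof -
      have "trace_on UNIV (br q) = m H q" using hH by simp
      also have "\<dots> = m q H" by (rule msym)
      also have "\<dots> = m (br H v) w" unfolding q_def by (rule A(2)[OF Ha[OF hH]])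
      finally show ?thesis .
    qed
    moreover have "(\<Sum>b\<in>Bg. m (br b q) (fg b)) = - (\<Sum>b\<in>Bg. m (br q b) (fg b))"
    proof -
      have "m (br b q) (fg b) = - m (br q b) (fg b)" for b
      proof -
        have "br b q = - br q b" by (rule anti)
        then show ?thesis by (simp add: bilinear_lneg[OF mb])
      qed
      then show ?thesis by (simp add: sum_negf)
    qed
    ultimately show ?thesis by simp
  qed
  have Aterm: "(\<Sum>b\<in>Bg. m (br v (A b w)) (fg b)) = (\<Sum>c\<in>Ba. m (br c (br v (fa c))) w)"
  proof -
    have "(\<Sum>b\<in>Bg. m (br v (A b w)) (fg b)) = (\<Sum>b\<in>Bg. \<Sum>c\<in>Ba. m (br c b) w * m (br v (fa c)) (fg b))"
    proof (rule sum.cong[OF refl])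
      fix b assume b: "b \<in> Bg"
      have "A b w = (\<Sum>c\<in>Ba. m (A b w) c *\<^sub>R fa c)" by (rule ra2[OF A(1)])
      also have "\<dots> = (\<Sum>c\<in>Ba. m (br c b) w *\<^sub>R fa c)"
        using A(2) Baa by (intro sum.cong refl) auto
      finally have "br v (A b w) = br v (\<Sum>c\<in>Ba. m (br c b) w *\<^sub>R fa c)" by (rule arg_cong)
      then have "br v (A b w) = (\<Sum>c\<in>Ba. m (br c b) w *\<^sub>R br v (fa c))"
        by (simp add: brsumR bilinear_rmul[OF brb])
      then show "m (br v (A b w)) (fg b) = (\<Sum>c\<in>Ba. m (br c b) w * m (br v (fa c)) (fg b))"
        by (simp add: msumL bilinear_lmul[OF mb])
    qed
    also have "\<dots> = (\<Sum>c\<in>Ba. \<Sum>b\<in>Bg. m (br c b) w * m (br v (fa c)) (fg b))" by (rule sum.swap)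
    also have "\<dots> = (\<Sum>c\<in>Ba. m (br c (br v (fa c))) w)"
    proof (rule sum.cong[OF refl])
      fix c assume c: "c \<in> Ba"
      have ca: "c \<in> a" using c Baa by blast
      have "(\<Sum>b\<in>Bg. m (br c b) w * m (br v (fa c)) (fg b)) = (\<Sum>b\<in>Bg. m (br v (fa c)) (m (br c w) b *\<^sub>R fg b))"
      proof (rule sum.cong[OF refl])
        fix b
        have "m (br c b) w = m b (br c w)" using sa[OF ca] .
        also have "\<dots> = m (br c w) b" by (rule msym)
        finally show "m (br c b) w * m (br v (fa c)) (fg b) = m (br v (fa c)) (m (br c w) b *\<^sub>R fg b)"
          by (simp add: bilinear_rmul[OF mb])
      qed
      also have "\<dots> = m (br v (fa c)) (\<Sum>b\<in>Bg. m (br c w) b *\<^sub>R fg b)"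
      proof -
        have "linear (m (br v (fa c)))" using mb by (simp add: bilinear_def)
        then show ?thesis by (simp add: linear_sum)
      qed
      also have "(\<Sum>b\<in>Bg. m (br c w) b *\<^sub>R fg b) = br c w" by (rule rg2[OF brg, symmetric])
      also have "m (br v (fa c)) (br c w) = m (br c (br v (fa c))) w" using sa[OF ca] by simp
      finally show "(\<Sum>b\<in>Bg. m (br c b) w * m (br v (fa c)) (fg b)) = m (br c (br v (fa c))) w" .
    qed
    finally show ?thesis .
  qed
  have cancel: "m (br c (br v (fa c))) w = - m (br (fa c) (br c v)) w" if c: "c \<in> Ba" for c
  proof -
    have ca: "c \<in> a" using c Baa by blast
    have "br v (fa c) = - br (fa c) v" by (rule anti)
    then have "br c (br v (fa c)) = - br c (br (fa c) v)" by (simp add: bilinear_rneg[OF brb])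
    moreover have "br c (br (fa c) v) = br (br c (fa c)) v + br (fa c) (br c v)" by (rule jac2)
    moreover have "br c (fa c) = 0" using aab[OF ca faa[OF c]] .
    ultimately have "br c (br v (fa c)) = - br (fa c) (br c v)" by (simp add: bilinear_lzero[OF brb])
    then show ?thesis by (simp add: bilinear_lneg[OF mb])
  qed
  have "ricci UNIV br m v w = (\<Sum>b\<in>Bg. m (?Rg b) (fg b)) + (\<Sum>b\<in>Bg. m (br b q) (fg b))
      - (\<Sum>b\<in>Bg. m (br v (A b w)) (fg b)) - (\<Sum>c\<in>Ba. m (br (fa c) (br c v)) w)"
    using tr Rg Ra by (simp add: sum.distrib sum_subtractf sum_negf)
  also have "(\<Sum>b\<in>Bg. m (br v (A b w)) (fg b)) = - (\<Sum>c\<in>Ba. m (br (fa c) (br c v)) w)"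
    using Aterm cancel by (simp add: sum_negf)
  finally show ?thesis using trg Hterm by simp
qed

end

theorem lemma3p8_PI:
  fixes br :: "'a::euclidean_space \<Rightarrow> 'a \<Rightarrow> 'a" and m :: "'a \<Rightarrow> 'a \<Rightarrow> real"
    and g a :: "'a set" and H :: 'a
  assumes "lie_algebra_on UNIV br" and "metric_on UNIV m"
    and "pseudo_iwasawa br m g a"
    and "\<forall>v. m H v = trace_on UNIV (br v)"
  shows "(\<forall>v\<in>g. \<forall>w\<in>g. ricci UNIV br m v w = ricci g br m v w - m (br H v) w)
       \<and> (\<forall>v\<in>g. \<forall>X\<in>a. ricci UNIV br m v X = 0)
       \<and> (\<forall>X\<in>a. \<forall>Y\<in>a. ricci UNIV br m X Y = - trace_on UNIV (br X \<circ> br Y))"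
proof -
  interpret PI br m g a using assms(1-3) by unfold_locales
  show ?thesis using case1 case2 case3 assms(4) by blast
qed


theorem lemma3p8:
  fixes br :: "'a::euclidean_space \<Rightarrow> 'a \<Rightarrow> 'a" and m :: "'a \<Rightarrow> 'a \<Rightarrow> real"
    and g a :: "'a set" and H :: 'a
  assumes "lie_algebra_on UNIV br" and "metric_on UNIV m"
    and "pseudo_iwasawa br m g a"
    and "\<forall>v. m H v = trace_on UNIV (br v)"
  shows "(\<forall>v\<in>g. \<forall>w\<in>g. ricci UNIV br m v w = ricci g br m v w - m (br H v) w)
       \<and> (\<forall>v\<in>g. \<forall>X\<in>a. ricci UNIV br m v X = 0)
       \<and> (\<forall>X\<in>a. \<forall>Y\<in>a. ricci UNIV br m X Y = - trace_on UNIV (br X \<circ> br Y))"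
  using assms by (rule lemma3p8_PI)

end
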